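(* For positive integers $n,k$, $F(n,k)=k(n-1)$.
   Context: Graphs are finite, loopless, possibly with multiple edges. $\kappa'(G)$ is the edge connectivity and $\overline{\kappa'}(G)=\max\{\kappa'(H): H \text{ a subgraph of } G\}$. $F(n,k)$ denotes the maximum number of edges of a graph $G$ on $n$ vertices with $\overline{\kappa'}(G)\le k$. *)

theory Defs
  imports Main "HOL-Library.Multiset"
begin

definition multigraph :: "'a set \<Rightarrow> 'a set multiset \<Rightarrow> bool" where
  "multigraph V E \<longleftrightarrow> finite V \<and>
     (\<forall>e \<in># E. \<exists>u v. e = {u, v} \<and> u \<noteq> v \<and> u \<in> V \<and> v \<in> V)"

definition adj :: "'a set multiset \<Rightarrow> ('a \<times> 'a) set" where
  "adj E = {(u, v). {u, v} \<in># E}"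

definition connected_mg :: "'a set \<Rightarrow> 'a set multiset \<Rightarrow> bool" where
  "connected_mg V E \<longleftrightarrow> (\<forall>u \<in> V. \<forall>v \<in> V. (u, v) \<in> (adj E)\<^sup>*)"

definition edge_conn :: "'a set \<Rightarrow> 'a set multiset \<Rightarrow> nat" where
  "edge_conn V E = (if card V \<le> 1 then 0
     else (LEAST k. \<exists>F. F \<subseteq># E \<and> size F = k \<and> \<not> connected_mg V (E - F)))"

definition subgraph :: "'a set \<Rightarrow> 'a set multiset \<Rightarrow> 'a set \<Rightarrow> 'a set multiset \<Rightarrow> bool" where
  "subgraph V' E' V E \<longleftrightarrow> V' \<subseteq> V \<and> E' \<subseteq># E \<and> multigraph V' E'"

definition max_edge_conn :: "'a set \<Rightarrow> 'a set multiset \<Rightarrow> nat" where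
  "max_edge_conn V E = Max {edge_conn V' E' | V' E'. subgraph V' E' V E}"

text \<open>F(n,k): maximum number of edges of a multigraph on n vertices with
  max_edge_conn at most k (vertices taken from nat; the notion is invariant
  under renaming vertices).\<close>
definition F :: "nat \<Rightarrow> nat \<Rightarrow> nat" where
  "F n k = Max {size E | (V :: nat set) E. multigraph V E \<and> card V = n \<and> max_edge_conn V E \<le> k}"

end

theory Submission
  imports Defs
begin

lemma two_elems:
  assumes "1 < card V" shows "\<exists>u v. u \<in> V \<and> v \<in> V \<and> u \<noteq> v"
proof -
  have fin: "finite V"
  proof (rule ccontr)
    assume "infinite V" with assms show False by simp
  qed
  show ?thesis using assms card_le_Suc0_iff_eq[OF fin] by auto
qed

lemma card_le1_noedge:
  assumes "multigraph V E" "card V \<le> 1" shows "E = {#}"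
proof (rule ccontr)
  assume "E \<noteq> {#}"
  then obtain e where "e \<in># E" by blast
  then obtain u v where "u \<noteq> v" "u \<in> V" "v \<in> V" using assms(1) unfolding multigraph_def by blast
  moreover have "finite V" using assms(1) unfolding multigraph_def by blast
  ultimately have "card {u,v} \<le> card V" by (intro card_mono) auto
  with \<open>u \<noteq> v\<close> assms(2) show False by simp
qed

lemma ec_witness:
  assumes "multigraph V E" "card V > 1"
  shows "\<exists>F. F \<subseteq># E \<and> size F = edge_conn V E \<and> \<not> connected_mg V (E - F)"
proof -
  have fin: "finite V" using assms(1) unfolding multigraph_def by blast
  obtain u v where uv: "u \<in> V" "v \<in> V" "u \<noteq> v"
    using two_elems[OF assms(2)] by blast
  have "adj ({#} :: 'a set multiset) = {}" unfolding adj_def by simp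
  hence "\<not> connected_mg V (E - E)" unfolding connected_mg_def using uv by auto
  hence P: "\<exists>F. F \<subseteq># E \<and> size F = size E \<and> \<not> connected_mg V (E - F)" by blast
  show ?thesis unfolding edge_conn_def using assms(2)
    using LeastI[where P="\<lambda>k. \<exists>F. F \<subseteq># E \<and> size F = k \<and> \<not> connected_mg V (E - F)", OF P]
    by simp
qed

lemma edge_conn_le_size:
  assumes "multigraph V E" shows "edge_conn V E \<le> size E"
proof (cases "card V \<le> 1")
  case True thus ?thesis unfolding edge_conn_def by simp
next
  case False
  obtain u v where uv: "u \<in> V" "v \<in> V" "u \<noteq> v"
    using two_elems[of V] False by auto
  have "adj ({#} :: 'a set multiset) = {}" unfolding adj_def by simp
  hence "\<not> connected_mg V (E - E)" unfolding connected_mg_def using uv by auto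
  hence P: "\<exists>F. F \<subseteq># E \<and> size F = size E \<and> \<not> connected_mg V (E - F)" by blast
  show ?thesis unfolding edge_conn_def using False
    using Least_le[where P="\<lambda>k. \<exists>F. F \<subseteq># E \<and> size F = k \<and> \<not> connected_mg V (E - F)", OF P]
    by simp
qed

lemma ec_set_finite:
  "finite {edge_conn V' E' | V' E'. subgraph V' E' V E}"
proof (rule finite_subset)
  show "{edge_conn V' E' | V' E'. subgraph V' E' V E} \<subseteq> {..size E}"
  proof
    fix x assume "x \<in> {edge_conn V' E' | V' E'. subgraph V' E' V E}"
    then obtain V' E' where "x = edge_conn V' E'" "subgraph V' E' V E" by blast
    thus "x \<in> {..size E}" unfolding subgraph_def
      using edge_conn_le_size[of V' E'] size_mset_mono[of E' E] by auto
  qed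
qed simp

lemma mec_le:
  "max_edge_conn V E \<le> k \<longleftrightarrow> (\<forall>V' E'. subgraph V' E' V E \<longrightarrow> edge_conn V' E' \<le> k)"
proof -
  have "subgraph {} {#} V E" unfolding subgraph_def multigraph_def by simp
  hence ne: "{edge_conn V' E' | V' E'. subgraph V' E' V E} \<noteq> {}" by blast
  show ?thesis unfolding max_edge_conn_def Max_le_iff[OF ec_set_finite ne] by blast
qed

lemma upper:
  assumes "multigraph V E" "\<forall>V' E'. subgraph V' E' V E \<longrightarrow> edge_conn V' E' \<le> k"
  shows "size E \<le> k * (card V - 1)"
  using assms
proof (induction "card V" arbitrary: V E rule: less_induct)
  case less
  note mg = less.prems(1) and sub = less.prems(2)
  have fin: "finite V" using mg unfolding multigraph_def by blast
  show ?case
  proof (cases "card V \<le> 1")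
    case True thus ?thesis using card_le1_noedge[OF mg] by simp
  next
    case False
    hence gt: "card V > 1" by simp
    obtain F where F: "F \<subseteq># E" "size F = edge_conn V E" "\<not> connected_mg V (E - F)"
      using ec_witness[OF mg gt] by blast
    have "subgraph V E V E" unfolding subgraph_def using mg by simp
    hence Fk: "size F \<le> k" using sub F(2) by metis
    define G where "G = E - F"
    define R where "R = adj G"
    obtain a b where ab: "a \<in> V" "b \<in> V" "(a,b) \<notin> R\<^sup>*"
      using F(3) unfolding connected_mg_def R_def G_def by blast
    define A where "A = {w \<in> V. (a,w) \<in> R\<^sup>*}"
    define B where "B = V - A"
    have aA: "a \<in> A" unfolding A_def using ab by simp
    have bB: "b \<in> B" unfolding B_def A_def using ab by simp
    have GE: "G \<subseteq># E" unfolding G_def by simp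
    have clos: "x \<in> A \<longleftrightarrow> y \<in> A" if "{x,y} \<in># G" "x \<in> V" "y \<in> V" for x y
    proof -
      have "(x,y) \<in> R" using that unfolding R_def adj_def by simp
      moreover have "(y,x) \<in> R" using that unfolding R_def adj_def by (simp add: insert_commute)
      show ?thesis
      proof
        assume "x \<in> A"
        hence "(a,x) \<in> R\<^sup>*" unfolding A_def by simp
        hence "(a,y) \<in> R\<^sup>*" using \<open>(x,y) \<in> R\<close> by (rule rtrancl.rtrancl_into_rtrancl)
        thus "y \<in> A" unfolding A_def using that by simp
      next
        assume "y \<in> A"
        hence "(a,y) \<in> R\<^sup>*" unfolding A_def by simp
        hence "(a,x) \<in> R\<^sup>*" using \<open>(y,x) \<in> R\<close> by (rule rtrancl.rtrancl_into_rtrancl)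
        thus "x \<in> A" unfolding A_def using that by simp
      qed
    qed
    define GA where "GA = filter_mset (\<lambda>e. e \<subseteq> A) G"
    define GB where "GB = filter_mset (\<lambda>e. \<not> e \<subseteq> A) G"
    have edgeG: "\<exists>u v. e = {u,v} \<and> u \<noteq> v \<and> u \<in> V \<and> v \<in> V" if "e \<in># G" for e
      using that GE mg unfolding multigraph_def by (meson mset_subset_eqD)
    have mgA: "multigraph A GA" unfolding multigraph_def
    proof
      show "finite A" unfolding A_def using fin by simp
      show "\<forall>e\<in>#GA. \<exists>u v. e = {u, v} \<and> u \<noteq> v \<and> u \<in> A \<and> v \<in> A"
        unfolding GA_def using edgeG by fastforce
    qed
    have mgB: "multigraph B GB" unfolding multigraph_def
    proof
      show "finite B" unfolding B_def using fin by simp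
      show "\<forall>e\<in>#GB. \<exists>u v. e = {u, v} \<and> u \<noteq> v \<and> u \<in> B \<and> v \<in> B"
      proof
        fix e assume e: "e \<in># GB"
        hence eG: "e \<in># G" and nA: "\<not> e \<subseteq> A" unfolding GB_def by auto
        obtain u v where uv: "e = {u,v}" "u \<noteq> v" "u \<in> V" "v \<in> V" using edgeG[OF eG] by blast
        have "u \<notin> A \<and> v \<notin> A" using clos[of u v] uv eG nA by auto
        thus "\<exists>u v. e = {u, v} \<and> u \<noteq> v \<and> u \<in> B \<and> v \<in> B" using uv unfolding B_def by blast
      qed
    qed
    have AV: "A \<subseteq> V" unfolding A_def by auto
    have subA: "\<forall>V' E'. subgraph V' E' A GA \<longrightarrow> edge_conn V' E' \<le> k"
    proof (intro allI impI)
      fix V' E' assume "subgraph V' E' A GA"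
      hence h: "V' \<subseteq> A" "E' \<subseteq># GA" "multigraph V' E'" unfolding subgraph_def by auto
      have "GA \<subseteq># E" unfolding GA_def using GE multiset_filter_subset[of "\<lambda>e. e \<subseteq> A" G]
        by (rule subset_mset.order_trans[rotated])
      hence "subgraph V' E' V E" unfolding subgraph_def using h AV
        using subset_mset.order_trans[OF h(2)] by blast
      thus "edge_conn V' E' \<le> k" using sub by blast
    qed
    have subB: "\<forall>V' E'. subgraph V' E' B GB \<longrightarrow> edge_conn V' E' \<le> k"
    proof (intro allI impI)
      fix V' E' assume "subgraph V' E' B GB"
      hence h: "V' \<subseteq> B" "E' \<subseteq># GB" "multigraph V' E'" unfolding subgraph_def by auto
      have "GB \<subseteq># E" unfolding GB_def using GE multiset_filter_subset[of "\<lambda>e. \<not> e \<subseteq> A" G]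
        by (rule subset_mset.order_trans[rotated])
      moreover have "V' \<subseteq> V" using h(1) unfolding B_def by blast
      ultimately have "subgraph V' E' V E" unfolding subgraph_def using h
        using subset_mset.order_trans[OF h(2)] by blast
      with sub show "edge_conn V' E' \<le> k" by blast
    qed
    have cA: "card A < card V" by (rule psubset_card_mono[OF fin]) (use AV bB in \<open>auto simp: B_def\<close>)
    have cB: "card B < card V" by (rule psubset_card_mono[OF fin]) (use aA ab in \<open>auto simp: B_def\<close>)
    have IA: "size GA \<le> k * (card A - 1)" using less.hyps[OF cA mgA subA] .
    have IB: "size GB \<le> k * (card B - 1)" using less.hyps[OF cB mgB subB] .
    have sG: "size G = size GA + size GB" unfolding GA_def GB_def
      by (metis multiset_partition size_union)
    have sE: "size E = size G + size F" unfolding G_def using F(1)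
      by (simp add: size_Diff_submset size_mset_mono)
    have finA: "finite A" using finite_subset[OF AV fin] .
    have cV: "card A + card B = card V" unfolding B_def
      using card_Diff_subset[OF finA AV] card_mono[OF fin AV] by simp
    have A1: "card A > 0" using aA finA by (auto simp: card_gt_0_iff)
    have B1: "card B > 0" using bB fin by (auto simp: card_gt_0_iff B_def)
    obtain x y where xy: "card A = Suc x" "card B = Suc y" using A1 B1 gr0_implies_Suc by metis
    have "size E \<le> k * x + k * y + k" using IA IB sG sE Fk xy by simp
    also have "\<dots> = k * (card V - 1)" proof - have "card V - 1 = Suc (x + y)" using cV xy by simp thus ?thesis by (simp add: algebra_simps) qed
    finally show ?thesis .
  qed
qed


lemma size_single_count: "(\<forall>x\<in>#M. x = a) \<Longrightarrow> size M = count M a"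
  by (induction M) auto

lemma lower:
  fixes n k :: nat
  assumes "n \<ge> 1"
  defines "E0 \<equiv> (\<Sum>i\<in>{1..<n}. replicate_mset k {0::nat, i})"
  shows "multigraph {0..<n} E0" "size E0 = k * (n - 1)" "max_edge_conn {0..<n} E0 \<le> k"
proof -
  have memE: "\<exists>i. i \<in> {1..<n} \<and> e = {0,i}" if "e \<in># E0" for e
  proof -
    have "e \<in> (\<Union>i\<in>{1..<n}. set_mset (replicate_mset k {0::nat, i}))"
      using that unfolding E0_def set_mset_sum[OF finite_atLeastLessThan] .
    then obtain i where "i \<in> {1..<n}" "e \<in># replicate_mset k {0::nat, i}" by blast
    thus ?thesis by (auto split: if_splits)
  qed
  show "multigraph {0..<n} E0" unfolding multigraph_def
  proof
    show "finite {0..<n}" by simp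
    show "\<forall>e\<in>#E0. \<exists>u v. e = {u, v} \<and> u \<noteq> v \<and> u \<in> {0..<n} \<and> v \<in> {0..<n}"
    proof
      fix e assume "e \<in># E0"
      then obtain i where "i \<in> {1..<n}" "e = {0,i}" using memE by blast
      thus "\<exists>u v. e = {u, v} \<and> u \<noteq> v \<and> u \<in> {0..<n} \<and> v \<in> {0..<n}"
        by (intro exI[of _ 0] exI[of _ i]) auto
    qed
  qed
  show "size E0 = k * (n - 1)" unfolding E0_def by simp
  show "max_edge_conn {0..<n} E0 \<le> k" unfolding mec_le
  proof (intro allI impI)
    fix V' E' assume sg: "subgraph V' E' {0..<n} E0"
    show "edge_conn V' E' \<le> k"
    proof (cases "card V' \<le> 1")
      case True thus ?thesis unfolding edge_conn_def by simp
    next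
      case False
      hence gt: "1 < card V'" by simp
      obtain u v where uv: "u \<in> V'" "v \<in> V'" "u \<noteq> v" using two_elems[OF gt] by blast
      obtain m where m: "m \<in> V'" "m \<noteq> 0" using uv by metis
      obtain w where w: "w \<in> V'" "w \<noteq> m" using uv by metis
      have E'E: "E' \<subseteq># E0" using sg unfolding subgraph_def by simp
      define Fm where "Fm = filter_mset (\<lambda>e. m \<in> e) E'"
      have diff: "E' - Fm = filter_mset (\<lambda>e. m \<notin> e) E'"
        unfolding Fm_def by (metis add_diff_cancel_left' multiset_partition)
      have "(m, w) \<notin> (adj (E' - Fm))\<^sup>*"
      proof
        assume "(m, w) \<in> (adj (E' - Fm))\<^sup>*"
        thus False
        proof (cases rule: converse_rtranclE)
          case base thus False using w by simp
        next
          case (step y)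
          hence "{m,y} \<in># E' - Fm" unfolding adj_def by simp
          thus False unfolding diff by simp
        qed
      qed
      hence nc: "\<not> connected_mg V' (E' - Fm)" unfolding connected_mg_def using m w by blast
      have "(LEAST x. \<exists>F. F \<subseteq># E' \<and> size F = x \<and> \<not> connected_mg V' (E' - F)) \<le> size Fm"
        by (rule Least_le) (use nc in \<open>intro exI[of _ Fm], simp add: Fm_def\<close>)
      hence "edge_conn V' E' \<le> size Fm"
        unfolding edge_conn_def using False by simp
      also have "size Fm \<le> size (filter_mset (\<lambda>e. m \<in> e) E0)"
        unfolding Fm_def by (intro size_mset_mono multiset_filter_mono E'E)
      also have "\<dots> = count (filter_mset (\<lambda>e. m \<in> e) E0) {0,m}"
      proof (rule size_single_count, rule ballI)
        fix x assume "x \<in># filter_mset (\<lambda>e. m \<in> e) E0"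
        hence "x \<in># E0" "m \<in> x" by auto
        then obtain i where "i \<in> {1..<n}" "x = {0,i}" using memE by blast
        thus "x = {0,m}" using \<open>m \<in> x\<close> m by auto
      qed
      also have "\<dots> \<le> count E0 {0,m}" by simp
      also have "\<dots> = (\<Sum>i\<in>{1..<n}. (if i = m then k else 0))"
        unfolding E0_def count_sum
      proof (rule sum.cong)
        fix i assume i: "i \<in> {1..<n}"
        have "({0,m} = {0::nat,i}) = (i = m)" using i m by (auto simp: doubleton_eq_iff)
        thus "count (replicate_mset k {0, i}) {0, m} = (if i = m then k else 0)" by simp
      qed simp
      also have "\<dots> \<le> k" by simp
      finally show ?thesis .
    qed
  qed
qed

theorem corollary3p6:
  fixes n k :: nat
  assumes "n \<ge> 1" and "k \<ge> 1"
  shows "F n k = k * (n - 1)"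
proof -
  define S where "S = {size E | (V :: nat set) E. multigraph V E \<and> card V = n \<and> max_edge_conn V E \<le> k}"
  have bd: "s \<le> k * (n - 1)" if sS: "s \<in> S" for s
  proof -
    obtain V :: "nat set" and E where "s = size E" "multigraph V E" "card V = n" "max_edge_conn V E \<le> k"
      using sS unfolding S_def by blast
    thus ?thesis using upper[of V E k] mec_le[of V E k] by simp
  qed
  have fin: "finite S" by (rule finite_subset[of _ "{..k * (n - 1)}"]) (use bd in auto)
  have mem: "k * (n - 1) \<in> S"
  proof -
    have "k * (n - 1) = size (\<Sum>i\<in>{1..<n}. replicate_mset k {0::nat, i}) \<and>
      multigraph {0..<n} (\<Sum>i\<in>{1..<n}. replicate_mset k {0::nat, i}) \<and> card {0..<n} = n \<and>
      max_edge_conn {0..<n} (\<Sum>i\<in>{1..<n}. replicate_mset k {0::nat, i}) \<le> k"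
      using lower[OF assms(1), of k] by simp
    thus ?thesis unfolding S_def by blast
  qed
  show ?thesis unfolding F_def S_def[symmetric] by (rule Max_eqI[OF fin bd mem])
qed

end
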